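(* For any $n\times n$ completely positive semidefinite matrix $X$, $$\mathrm{cpsd}\text{-}\mathrm{rank}(X)\ge \frac{\left(\sum_{i=1}^n\sqrt{X_{ii}}\right)^2}{\sum_{i,j=1}^n X_{ij}}.$$
   Context: An $n\times n$ matrix $X$ is completely positive semidefinite (cpsd) if there exist $d\ge1$ and Hermitian positive semidefinite $d\times d$ matrices $P_1,\dots,P_n$ with $X_{ij}=\mathrm{Tr}(P_iP_j)$ for all $i,j$; the cpsd-rank of $X$ is the least such $d$. *)

theory Defs
  imports Complex_Main
begin

text \<open>Square d x d complex matrices are represented as functions nat => nat => complex,
  of which only the entries with indices below d are relevant.\<close>

definition hermitian_psd :: "nat \<Rightarrow> (nat \<Rightarrow> nat \<Rightarrow> complex) \<Rightarrow> bool" where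
  "hermitian_psd d P \<longleftrightarrow>
     (\<forall>i<d. \<forall>j<d. P i j = cnj (P j i)) \<and>
     (\<forall>v :: nat \<Rightarrow> complex. 0 \<le> Re (\<Sum>i<d. \<Sum>j<d. cnj (v i) * P i j * v j))"

definition trace_prod :: "nat \<Rightarrow> (nat \<Rightarrow> nat \<Rightarrow> complex) \<Rightarrow> (nat \<Rightarrow> nat \<Rightarrow> complex) \<Rightarrow> complex" where
  "trace_prod d P Q = (\<Sum>i<d. \<Sum>k<d. P i k * Q k i)"

definition cpsd_factorization :: "nat \<Rightarrow> (nat \<Rightarrow> nat \<Rightarrow> real) \<Rightarrow> nat \<Rightarrow> bool" where
  "cpsd_factorization n X d \<longleftrightarrow> d \<ge> 1 \<and>
     (\<exists>P :: nat \<Rightarrow> nat \<Rightarrow> nat \<Rightarrow> complex.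
        (\<forall>i<n. hermitian_psd d (P i)) \<and>
        (\<forall>i<n. \<forall>j<n. complex_of_real (X i j) = trace_prod d (P i) (P j)))"

definition cpsd :: "nat \<Rightarrow> (nat \<Rightarrow> nat \<Rightarrow> real) \<Rightarrow> bool" where
  "cpsd n X \<longleftrightarrow> (\<exists>d. cpsd_factorization n X d)"

definition cpsd_rank :: "nat \<Rightarrow> (nat \<Rightarrow> nat \<Rightarrow> real) \<Rightarrow> nat" where
  "cpsd_rank n X = (LEAST d. cpsd_factorization n X d)"

end

theory Submission
  imports Defs
begin

lemma sum_two:
  fixes g :: "nat \<Rightarrow> 'a::comm_monoid_add"
  assumes "a<d" "b<d" "a\<noteq>b" "\<And>k. k\<noteq>a \<Longrightarrow> k\<noteq>b \<Longrightarrow> g k = 0"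
  shows "(\<Sum>k<d. g k) = g a + g b"
proof -
  have "(\<Sum>k<d. g k) = (\<Sum>k\<in>{a,b}. g k)"
    by (rule sum.mono_neutral_right) (use assms in auto)
  thus ?thesis using assms by simp
qed

lemma sum_one:
  fixes g :: "nat \<Rightarrow> 'a::comm_monoid_add"
  assumes "a<d" "\<And>k. k\<noteq>a \<Longrightarrow> g k = 0"
  shows "(\<Sum>k<d. g k) = g a"
proof -
  have "(\<Sum>k<d. g k) = (\<Sum>k\<in>{a}. g k)"
    by (rule sum.mono_neutral_right) (use assms in auto)
  thus ?thesis using assms by simp
qed

lemma cs_sum:
  fixes s :: "nat \<Rightarrow> real"
  shows "(\<Sum>a<d. s a)\<^sup>2 \<le> real d * (\<Sum>a<d. (s a)\<^sup>2)"
proof -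
  have "(\<Sum>a<d. s a)\<^sup>2 = (\<Sum>a<d. \<Sum>b<d. s a * s b)"
    by (simp add: power2_eq_square sum_product)
  also have "\<dots> \<le> (\<Sum>a<d. \<Sum>b<d. ((s a)\<^sup>2 + (s b)\<^sup>2)/2)"
  proof (intro sum_mono)
    fix a b
    have "0 \<le> (s a - s b)\<^sup>2" by simp
    thus "s a * s b \<le> ((s a)\<^sup>2 + (s b)\<^sup>2)/2"
      unfolding power2_eq_square by (simp add: algebra_simps)
  qed
  also have "\<dots> = real d * (\<Sum>a<d. (s a)\<^sup>2)"
    by (simp add: sum.distrib add_divide_distrib sum_divide_distrib[symmetric] sum_distrib_left[symmetric] sum_distrib_right[symmetric]) 
  finally show ?thesis .
qed

lemma herm_diag:
  assumes "hermitian_psd d P" "a<d"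
  shows "P a a = complex_of_real (Re (P a a))" "Re (P a a) \<ge> 0"
proof -
  have "P a a = cnj (P a a)" using assms unfolding hermitian_psd_def by blast
  then have "Im (P a a) = 0" by (metis add.inverse_neutral complex_cnj_zero_iff complex_eq_iff
        cnj.simps(2) neg_equal_zero)
  then show "P a a = complex_of_real (Re (P a a))"
    by (simp add: complex_eq_iff)
  define v :: "nat \<Rightarrow> complex" where "v = (\<lambda>k. if k = a then 1 else 0)"
  have "0 \<le> Re (\<Sum>i<d. \<Sum>j<d. cnj (v i) * P i j * v j)"
    using assms unfolding hermitian_psd_def by blast
  also have "(\<Sum>i<d. \<Sum>j<d. cnj (v i) * P i j * v j) = P a a"
  proof -
    have "(\<Sum>j<d. cnj (v i) * P i j * v j) = cnj (v i) * P i a" for i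
      by (subst sum_one[OF assms(2)]) (auto simp: v_def)
    hence "(\<Sum>i<d. \<Sum>j<d. cnj (v i) * P i j * v j) = (\<Sum>i<d. cnj (v i) * P i a)" by simp
    also have "\<dots> = P a a"
      by (subst sum_one[OF assms(2)]) (auto simp: v_def)
    finally show ?thesis .
  qed
  finally show "Re (P a a) \<ge> 0" .
qed

lemma quad_disc:
  fixes A B m :: real
  assumes "A \<ge> 0" "B \<ge> 0" "m \<ge> 0" "\<And>c. 0 \<le> c*c*A - 2*c*m + B*m"
  shows "m \<le> A * B"
proof (rule ccontr)
  assume H: "\<not> m \<le> A * B"
  show False
  proof (cases "A = 0")
    case True
    have "0 \<le> (B+1)*(B+1)*A - 2*(B+1)*m + B*m" by (rule assms(4))
    then show False using True H assms by (simp add: algebra_simps) (smt (verit) mult_nonneg_nonneg)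
  next
    case False
    hence Ap: "A > 0" using assms by simp
    have "0 \<le> (m/A)*(m/A)*A - 2*(m/A)*m + B*m" by (rule assms(4))
    also have "\<dots> = m * (B - m/A)" using Ap by (simp add: field_simps power2_eq_square)
    also have "\<dots> < 0"
    proof -
      have "m/A > B" using H Ap by (simp add: field_simps mult.commute)
      moreover have "m > 0" using H assms by (smt (verit) mult_nonneg_nonneg)
      ultimately show ?thesis by (simp add: mult_pos_neg)
    qed
    finally show False by simp
  qed
qed

lemma herm_minor:
  assumes "hermitian_psd d P" "a<d" "b<d"
  shows "(cmod (P a b))\<^sup>2 \<le> Re (P a a) * Re (P b b)"
proof (cases "a = b")
  case True
  then show ?thesis using herm_diag[OF assms(1,2)]
    by (metis norm_of_real power2_abs power2_eq_square order_refl)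
next
  case False
  define A where "A = Re (P a a)"
  define B where "B = Re (P b b)"
  define m where "m = (cmod (P a b))\<^sup>2"
  have PA: "P a a = complex_of_real A" and A0: "A \<ge> 0" using herm_diag[OF assms(1,2)] A_def by auto
  have PB: "P b b = complex_of_real B" and B0: "B \<ge> 0" using herm_diag[OF assms(1,3)] B_def by auto
  have hba: "P b a = cnj (P a b)" using assms unfolding hermitian_psd_def by blast
  have pm: "P a b * P b a = complex_of_real m"
    unfolding hba m_def by (simp add: complex_norm_square[symmetric])
  have pm2: "P b a * cnj (P b a) = complex_of_real m"
    using pm hba by (simp add: mult.commute)
  have "0 \<le> c*c*A - 2*c*m + B*m" for c
  proof -
    define v :: "nat \<Rightarrow> complex" where
      "v = (\<lambda>k. if k = a then complex_of_real c else if k = b then - P b a else 0)"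
    have "0 \<le> Re (\<Sum>i<d. \<Sum>j<d. cnj (v i) * P i j * v j)"
      using assms unfolding hermitian_psd_def by blast
    also have "(\<Sum>i<d. \<Sum>j<d. cnj (v i) * P i j * v j) =
       (cnj (v a) * P a a * v a + cnj (v a) * P a b * v b) + (cnj (v b) * P b a * v a + cnj (v b) * P b b * v b)"
    proof -
      have "(\<Sum>j<d. cnj (v i) * P i j * v j) = cnj (v i) * P i a * v a + cnj (v i) * P i b * v b" for i
        by (rule sum_two[OF assms(2,3) False]) (auto simp: v_def)
      hence "(\<Sum>i<d. \<Sum>j<d. cnj (v i) * P i j * v j) = (\<Sum>i<d. cnj (v i) * P i a * v a + cnj (v i) * P i b * v b)" by simp
      also have "\<dots> = (cnj (v a) * P a a * v a + cnj (v a) * P a b * v b) + (cnj (v b) * P b a * v a + cnj (v b) * P b b * v b)"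
        by (rule sum_two[OF assms(2,3) False]) (auto simp: v_def)
      finally show ?thesis .
    qed
    also have "\<dots> = complex_of_real (c*c*A - 2*c*m + B*m)"
      using False unfolding v_def PA PB
      apply (simp add: hba[symmetric])
      using pm pm2 by (simp add: algebra_simps hba[symmetric])
    finally show ?thesis by simp
  qed
  then show ?thesis using quad_disc[OF A0 B0] m_def A_def B_def by simp
qed

lemma trace_self:
  assumes "\<forall>a<d. \<forall>b<d. Q a b = cnj (Q b a)"
  shows "trace_prod d Q Q = complex_of_real (\<Sum>a<d. \<Sum>b<d. (cmod (Q a b))\<^sup>2)"
proof -
  have *: "Q a b * Q b a = complex_of_real ((cmod (Q a b))\<^sup>2)" if "a<d" "b<d" for a b
  proof -
    have "Q b a = cnj (Q a b)" using assms that by blast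
    thus ?thesis by (simp add: complex_norm_square[symmetric])
  qed
  show ?thesis unfolding trace_prod_def of_real_sum
    by (intro sum.cong refl) (rule *; simp)
qed

lemma fro_le:
  assumes "hermitian_psd d P"
  shows "sqrt (\<Sum>a<d. \<Sum>b<d. (cmod (P a b))\<^sup>2) \<le> (\<Sum>a<d. Re (P a a))"
proof -
  have "(\<Sum>a<d. \<Sum>b<d. (cmod (P a b))\<^sup>2) \<le> (\<Sum>a<d. \<Sum>b<d. Re (P a a) * Re (P b b))"
    using herm_minor[OF assms] by (intro sum_mono) auto
  also have "\<dots> = (\<Sum>a<d. Re (P a a))\<^sup>2"
    by (simp add: power2_eq_square sum_product)
  finally have "sqrt (\<Sum>a<d. \<Sum>b<d. (cmod (P a b))\<^sup>2) \<le> sqrt ((\<Sum>a<d. Re (P a a))\<^sup>2)"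
    using real_sqrt_le_mono by blast
  also have "\<dots> = (\<Sum>a<d. Re (P a a))"
  proof -
    have "0 \<le> (\<Sum>a<d. Re (P a a))" by (rule sum_nonneg) (simp add: herm_diag(2)[OF assms])
    thus ?thesis by simp
  qed
  finally show ?thesis .
qed

lemma trace_sum:
  "(\<Sum>i<n. \<Sum>j<n. trace_prod d (P i) (P j)) =
   trace_prod d (\<lambda>a b. \<Sum>i<n. P i a b) (\<lambda>a b. \<Sum>i<n. P i a b)"
proof -
  have "(\<Sum>i<n. \<Sum>j<n. trace_prod d (P i) (P j)) =
        (\<Sum>i<n. \<Sum>j<n. \<Sum>a<d. \<Sum>b<d. P i a b * P j b a)"
    by (simp add: trace_prod_def)
  also have "\<dots> = (\<Sum>i<n. \<Sum>a<d. \<Sum>j<n. \<Sum>b<d. P i a b * P j b a)"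
    by (intro sum.cong refl) (rule sum.swap)
  also have "\<dots> = (\<Sum>a<d. \<Sum>i<n. \<Sum>j<n. \<Sum>b<d. P i a b * P j b a)"
    by (rule sum.swap)
  also have "\<dots> = (\<Sum>a<d. \<Sum>i<n. \<Sum>b<d. \<Sum>j<n. P i a b * P j b a)"
    by (intro sum.cong refl) (rule sum.swap)
  also have "\<dots> = (\<Sum>a<d. \<Sum>b<d. \<Sum>i<n. \<Sum>j<n. P i a b * P j b a)"
    by (intro sum.cong refl) (rule sum.swap)
  also have "\<dots> = trace_prod d (\<lambda>a b. \<Sum>i<n. P i a b) (\<lambda>a b. \<Sum>i<n. P i a b)"
    by (simp add: trace_prod_def sum_product)
  finally show ?thesis .
qed

lemma herm_sym:
  assumes "hermitian_psd d Q"
  shows "\<forall>a<d. \<forall>b<d. Q a b = cnj (Q b a)"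
  using assms unfolding hermitian_psd_def by blast

theorem theorem3p8:
  fixes n :: nat and X :: "nat \<Rightarrow> nat \<Rightarrow> real"
  assumes "cpsd n X"
  shows "real (cpsd_rank n X) \<ge>
           (\<Sum>i<n. sqrt (X i i))\<^sup>2 / (\<Sum>i<n. \<Sum>j<n. X i j)"
proof -
  define d where "d = cpsd_rank n X"
  have fac: "cpsd_factorization n X d"
    using assms unfolding cpsd_def d_def cpsd_rank_def by (rule LeastI_ex)
  then obtain P where hP: "\<forall>i<n. hermitian_psd d (P i)"
    and hX: "\<forall>i<n. \<forall>j<n. complex_of_real (X i j) = trace_prod d (P i) (P j)"
    unfolding cpsd_factorization_def by blast
  define S where "S = (\<lambda>a b. \<Sum>i<n. P i a b)"
  define F where "F = (\<Sum>a<d. \<Sum>b<d. (cmod (S a b))\<^sup>2)"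
  define t where "t = (\<Sum>a<d. Re (S a a))"
  have Sherm: "\<forall>a<d. \<forall>b<d. S a b = cnj (S b a)"
  proof (intro allI impI)
    fix a b assume ab: "a<d" "b<d"
    have "S a b = (\<Sum>i<n. cnj (P i b a))" unfolding S_def
    proof (rule sum.cong[OF refl])
      fix i assume "i \<in> {..<n}"
      hence "hermitian_psd d (P i)" using hP by simp
      thus "P i a b = cnj (P i b a)" using herm_sym ab by blast
    qed
    also have "\<dots> = cnj (S b a)" unfolding S_def by (rule cnj_sum[symmetric])
    finally show "S a b = cnj (S b a)" .
  qed
  have "complex_of_real (\<Sum>i<n. \<Sum>j<n. X i j) = (\<Sum>i<n. \<Sum>j<n. trace_prod d (P i) (P j))"
    unfolding of_real_sum using hX by (intro sum.cong refl) auto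
  also have "\<dots> = trace_prod d S S" unfolding S_def by (rule trace_sum)
  also have "\<dots> = complex_of_real F" unfolding F_def by (rule trace_self[OF Sherm])
  finally have XF: "(\<Sum>i<n. \<Sum>j<n. X i j) = F" by (simp only: of_real_eq_iff)
  have Xii: "X i i = (\<Sum>a<d. \<Sum>b<d. (cmod (P i a b))\<^sup>2)" if "i<n" for i
  proof -
    have hi: "hermitian_psd d (P i)" using hP that by simp
    have "complex_of_real (X i i) = trace_prod d (P i) (P i)" using hX that by blast
    also have "\<dots> = complex_of_real (\<Sum>a<d. \<Sum>b<d. (cmod (P i a b))\<^sup>2)"
      by (rule trace_self[OF herm_sym[OF hi]])
    finally show ?thesis by (simp only: of_real_eq_iff)
  qed
  have sq: "sqrt (X i i) \<le> (\<Sum>a<d. Re (P i a a))" if "i<n" for i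
  proof -
    have hi: "hermitian_psd d (P i)" using hP that by simp
    show ?thesis unfolding Xii[OF that] by (rule fro_le[OF hi])
  qed
  have "(\<Sum>i<n. sqrt (X i i)) \<le> (\<Sum>i<n. \<Sum>a<d. Re (P i a a))"
    using sq by (intro sum_mono) auto
  also have "\<dots> = t" unfolding t_def S_def Re_sum by (rule sum.swap)
  finally have st: "(\<Sum>i<n. sqrt (X i i)) \<le> t" .
  have s0: "0 \<le> (\<Sum>i<n. sqrt (X i i))"
  proof (rule sum_nonneg)
    fix i assume "i \<in> {..<n}"
    hence "i < n" by simp
    hence "X i i \<ge> 0" unfolding Xii[OF \<open>i<n\<close>] by (intro sum_nonneg) auto
    thus "0 \<le> sqrt (X i i)" by simp
  qed
  have "t\<^sup>2 \<le> real d * (\<Sum>a<d. (Re (S a a))\<^sup>2)" unfolding t_def by (rule cs_sum)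
  also have "(\<Sum>a<d. (Re (S a a))\<^sup>2) \<le> (\<Sum>a<d. (cmod (S a a))\<^sup>2)"
  proof (intro sum_mono)
    fix a
    have "\<bar>Re (S a a)\<bar> \<le> cmod (S a a)" by (rule abs_Re_le_cmod)
    thus "(Re (S a a))\<^sup>2 \<le> (cmod (S a a))\<^sup>2"
      by (metis abs_ge_zero power2_abs power_mono)
  qed
  also have "(\<Sum>a<d. (cmod (S a a))\<^sup>2) \<le> F"
    unfolding F_def by (intro sum_mono member_le_sum) auto
  finally have tF: "t\<^sup>2 \<le> real d * F" by (simp add: mult_left_mono)
  have F0: "F \<ge> 0" unfolding F_def by (intro sum_nonneg) auto
  show ?thesis
  proof (cases "F = 0")
    case True thus ?thesis using XF d_def by simp
  next
    case False
    hence Fp: "F > 0" using F0 by simp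
    have "(\<Sum>i<n. sqrt (X i i))\<^sup>2 \<le> t\<^sup>2" using st s0 by (rule power_mono)
    also have "\<dots> \<le> real d * F" by (rule tF)
    finally show ?thesis using Fp XF d_def by (simp add: pos_divide_le_eq)
  qed
qed

end
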